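(* Let $\pi$ be a representation of a normed $*$-algebra $A$ in a pre-Hilbert space $H$, and assume that $\pi$ is weakly continuous on $A_{sa}$. Then every operator $\pi(a)$ $(a\in A)$ is bounded, and $\|\pi(a)\|\le r_\sigma(a)$ for all $a\in A$.
   Context: All algebras are complex. A normed $*$-algebra is a complex algebra $A$ with an involution $a\mapsto a^*$ (conjugate linear, $(ab)^*=b^*a^*$, $a^{**}=a$) and a norm $|\cdot|$ with $|ab|\le|a||b|$; the involution need not be continuous. $A_{sa}=\{a\in A:a=a^*\}$, viewed as a real normed space. For $a\in A$, $r_\lambda(a):=\inf_{n\ge1}|a^n|^{1/n}$ and $r_\sigma(a):=r_\lambda(a^*a)^{1/2}$. A representation of $A$ in a (complex, not necessarily complete) pre-Hilbert space $H$ is an algebra homomorphism $\pi$ from $A$ into the algebra of all linear operators $H\to H$ such that $\langle\pi(a)x,y\rangle=\langle x,\pi(a^* )y\rangle$ for all $x,y\in H$, $a\in A$. $\pi$ is weakly continuous on $A_{sa}$ if for every $x\in H$ the functional $a\mapsto\langle\pi(a)x,x\rangle$ is continuous on $A_{sa}$ (with respect to the norm of $A$). *)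

theory Defs
  imports "HOL-Analysis.Analysis"
begin

text \<open>The carrier is a type 'a with a ring structure (not necessarily
unital), a norm that is submultiplicative (class real_normed_algebra), and in addition a
complex scalar multiplication smul compatible with the real one and with the norm.
The involution star need not be continuous.\<close>

definition complex_normed_algebra :: "(complex \<Rightarrow> 'a::real_normed_algebra \<Rightarrow> 'a) \<Rightarrow> bool" where
  "complex_normed_algebra smul \<longleftrightarrow>
     (\<forall>r a. smul (complex_of_real r) a = r *\<^sub>R a) \<and>
     (\<forall>c a b. smul c (a + b) = smul c a + smul c b) \<and>
     (\<forall>c d a. smul (c + d) a = smul c a + smul d a) \<and>
     (\<forall>c d a. smul (c * d) a = smul c (smul d a)) \<and>
     (\<forall>a. smul 1 a = a) \<and>
     (\<forall>c a b. smul c (a * b) = smul c a * b) \<and>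
     (\<forall>c a b. smul c (a * b) = a * smul c b) \<and>
     (\<forall>c a. norm (smul c a) = cmod c * norm a)"

definition normed_star_algebra ::
  "(complex \<Rightarrow> 'a::real_normed_algebra \<Rightarrow> 'a) \<Rightarrow> ('a \<Rightarrow> 'a) \<Rightarrow> bool" where
  "normed_star_algebra smul star \<longleftrightarrow>
     complex_normed_algebra smul \<and>
     (\<forall>a b. star (a + b) = star a + star b) \<and>
     (\<forall>c a. star (smul c a) = smul (cnj c) (star a)) \<and>
     (\<forall>a b. star (a * b) = star b * star a) \<and>
     (\<forall>a. star (star a) = a)"

definition self_adjoint_part :: "('a \<Rightarrow> 'a) \<Rightarrow> 'a set" where
  "self_adjoint_part star = {a. star a = a}"

text \<open>Powers a^n for n \<ge> 1 in a possibly non-unital algebra.\<close>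
fun apow :: "'a::times \<Rightarrow> nat \<Rightarrow> 'a" where
  "apow a 0 = a"   \<comment> \<open>junk value, only n \<ge> 1 is used\<close>
| "apow a (Suc 0) = a"
| "apow a (Suc (Suc n)) = a * apow a (Suc n)"

definition r_lambda :: "'a::real_normed_algebra \<Rightarrow> real" where
  "r_lambda a = (INF n\<in>{1..}. norm (apow a n) powr (1 / real n))"

definition r_sigma :: "('a \<Rightarrow> 'a) \<Rightarrow> 'a::real_normed_algebra \<Rightarrow> real" where
  "r_sigma star a = sqrt (r_lambda (star a * a))"

definition pre_hilbert :: "(complex \<Rightarrow> 'h::ab_group_add \<Rightarrow> 'h) \<Rightarrow> ('h \<Rightarrow> 'h \<Rightarrow> complex) \<Rightarrow> bool" where
  "pre_hilbert hsmul ip \<longleftrightarrow>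
     (\<forall>c x y. hsmul c (x + y) = hsmul c x + hsmul c y) \<and>
     (\<forall>c d x. hsmul (c + d) x = hsmul c x + hsmul d x) \<and>
     (\<forall>c d x. hsmul (c * d) x = hsmul c (hsmul d x)) \<and>
     (\<forall>x. hsmul 1 x = x) \<and>
     (\<forall>x y z. ip (x + y) z = ip x z + ip y z) \<and>
     (\<forall>c x y. ip (hsmul c x) y = c * ip x y) \<and>
     (\<forall>x y. ip y x = cnj (ip x y)) \<and>
     (\<forall>x. Re (ip x x) \<ge> 0) \<and>
     (\<forall>x. ip x x = 0 \<longrightarrow> x = 0)"

definition hnorm :: "('h \<Rightarrow> 'h \<Rightarrow> complex) \<Rightarrow> 'h \<Rightarrow> real" where
  "hnorm ip x = sqrt (Re (ip x x))"

definition bounded_op :: "('h \<Rightarrow> 'h \<Rightarrow> complex) \<Rightarrow> ('h \<Rightarrow> 'h) \<Rightarrow> bool" where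
  "bounded_op ip T \<longleftrightarrow> (\<exists>C. \<forall>x. hnorm ip (T x) \<le> C * hnorm ip x)"

definition op_norm :: "('h \<Rightarrow> 'h \<Rightarrow> complex) \<Rightarrow> ('h \<Rightarrow> 'h) \<Rightarrow> real" where
  "op_norm ip T = (SUP x\<in>{x. hnorm ip x \<le> 1}. hnorm ip (T x))"

definition star_representation ::
  "(complex \<Rightarrow> 'a::real_normed_algebra \<Rightarrow> 'a) \<Rightarrow> ('a \<Rightarrow> 'a) \<Rightarrow>
   (complex \<Rightarrow> 'h::ab_group_add \<Rightarrow> 'h) \<Rightarrow> ('h \<Rightarrow> 'h \<Rightarrow> complex) \<Rightarrow> ('a \<Rightarrow> 'h \<Rightarrow> 'h) \<Rightarrow> bool" where
  "star_representation smul star hsmul ip \<pi> \<longleftrightarrow>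
     (\<forall>a x y. \<pi> a (x + y) = \<pi> a x + \<pi> a y) \<and>
     (\<forall>a c x. \<pi> a (hsmul c x) = hsmul c (\<pi> a x)) \<and>
     (\<forall>a b x. \<pi> (a + b) x = \<pi> a x + \<pi> b x) \<and>
     (\<forall>c a x. \<pi> (smul c a) x = hsmul c (\<pi> a x)) \<and>
     (\<forall>a b x. \<pi> (a * b) x = \<pi> a (\<pi> b x)) \<and>
     (\<forall>a x y. ip (\<pi> a x) y = ip x (\<pi> (star a) y))"

definition weakly_continuous_sa ::
  "('a::real_normed_algebra \<Rightarrow> 'a) \<Rightarrow> ('h \<Rightarrow> 'h \<Rightarrow> complex) \<Rightarrow> ('a \<Rightarrow> 'h \<Rightarrow> 'h) \<Rightarrow> bool" where
  "weakly_continuous_sa star ip \<pi> \<longleftrightarrow>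
     (\<forall>x. continuous_on (self_adjoint_part star) (\<lambda>a. ip (\<pi> a x) x))"

end

theory Submission
  imports Defs
begin


locale ph =
  fixes hsmul :: "complex \<Rightarrow> 'h::ab_group_add \<Rightarrow> 'h" and ip :: "'h \<Rightarrow> 'h \<Rightarrow> complex"
  assumes PH: "pre_hilbert hsmul ip"
begin

lemma ip_addL: "ip (x + y) z = ip x z + ip y z" by (rule PH[unfolded pre_hilbert_def, THEN conjunct2, THEN conjunct2, THEN conjunct2, THEN conjunct2, THEN conjunct1, rule_format])
lemma ip_smulL: "ip (hsmul c x) y = c * ip x y" by (rule PH[unfolded pre_hilbert_def, THEN conjunct2, THEN conjunct2, THEN conjunct2, THEN conjunct2, THEN conjunct2, THEN conjunct1, rule_format])
lemma ip_sym: "ip y x = cnj (ip x y)" by (rule PH[unfolded pre_hilbert_def, THEN conjunct2, THEN conjunct2, THEN conjunct2, THEN conjunct2, THEN conjunct2, THEN conjunct2, THEN conjunct1, rule_format])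
lemma ip_pos: "Re (ip x x) \<ge> 0" by (rule PH[unfolded pre_hilbert_def, THEN conjunct2, THEN conjunct2, THEN conjunct2, THEN conjunct2, THEN conjunct2, THEN conjunct2, THEN conjunct2, THEN conjunct1, rule_format])
lemma ip_def0: "ip x x = 0 \<Longrightarrow> x = 0" by (rule PH[unfolded pre_hilbert_def, THEN conjunct2, THEN conjunct2, THEN conjunct2, THEN conjunct2, THEN conjunct2, THEN conjunct2, THEN conjunct2, THEN conjunct2, rule_format])

lemma ip_zeroL[simp]: "ip 0 y = 0"
  using ip_addL[of 0 0 y] by simp
lemma ip_addR: "ip x (y + z) = ip x y + ip x z"
  using ip_sym[of x "y+z"] ip_addL[of y z x] ip_sym[of x y] ip_sym[of x z] by simp
lemma ip_zeroR[simp]: "ip x 0 = 0"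
  using ip_addR[of x 0 0] by simp
lemma ip_smulR: "ip x (hsmul c y) = cnj c * ip x y"
  using ip_sym[of x "hsmul c y"] ip_smulL[of c y x] ip_sym[of x y] by simp
lemma ip_self_real: "Im (ip x x) = 0"
  using ip_sym[of x x] by (metis Reals_cnj_iff complex_is_Real_iff)
lemma ip_Re_sym: "Re (ip y x) = Re (ip x y)"
  using ip_sym[of x y] by simp

lemma hnorm_nonneg: "hnorm ip x \<ge> 0" unfolding hnorm_def using ip_pos by simp
lemma hnorm_sq: "(hnorm ip x)^2 = Re (ip x x)" unfolding hnorm_def using ip_pos by simp
lemma hnorm_zero_iff: "hnorm ip x = 0 \<longleftrightarrow> x = 0"
proof
  assume "hnorm ip x = 0"
  then have "Re (ip x x) = 0" using hnorm_sq[of x] by simp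
  then have "ip x x = 0" using ip_self_real[of x] by (simp add: complex_eq_iff)
  then show "x = 0" by (rule ip_def0)
qed (simp add: hnorm_def)

lemma expand: "ip (hsmul a u + hsmul b v) (hsmul a u + hsmul b v)
   = cnj a * (a * ip u u) + (cnj a * (b * ip v u) + (cnj b * (a * ip u v) + cnj b * (b * ip v v)))"
  by (simp only: ip_addL ip_addR ip_smulL ip_smulR distrib_left add.assoc)

lemma expand_Re: "Re (ip (hsmul (complex_of_real a) u + hsmul (complex_of_real b) v)
                        (hsmul (complex_of_real a) u + hsmul (complex_of_real b) v))
   = a*a*Re (ip u u) + 2*a*b*Re (ip u v) + b*b*Re (ip v v)"
proof -
  have "Re (ip v u) = Re (ip u v)" by (rule ip_Re_sym)
  then show ?thesis unfolding expand by (simp add: algebra_simps)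
qed

lemma CS: "Re (ip u v) \<le> hnorm ip u * hnorm ip v"
proof (cases "u = 0 \<or> v = 0")
  case True
  then show ?thesis by (auto simp: hnorm_def)
next
  case False
  define s where "s = hnorm ip u"
  define r where "r = hnorm ip v"
  have sp: "s > 0" "r > 0" using False hnorm_nonneg[of u] hnorm_nonneg[of v] hnorm_zero_iff[of u] hnorm_zero_iff[of v]
    unfolding s_def r_def by linarith+
  have uu: "Re (ip u u) = s * s" unfolding s_def using hnorm_sq[of u] by (simp add: power2_eq_square)
  have vv: "Re (ip v v) = r * r" unfolding r_def using hnorm_sq[of v] by (simp add: power2_eq_square)
  have "0 \<le> Re (ip (hsmul (complex_of_real r) u + hsmul (complex_of_real (-s)) v)
                        (hsmul (complex_of_real r) u + hsmul (complex_of_real (-s)) v))" by (rule ip_pos)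
  also have "\<dots> = r * r * (s * s) + 2 * r * (- s) * Re (ip u v) + (- s) * (- s) * (r * r)" unfolding expand_Re uu vv ..
  finally have "0 \<le> 2*(r * s) * (r * s - Re (ip u v))" by (simp add: algebra_simps)
  then have "0 \<le> r * s - Re (ip u v)" using sp by (smt (verit) mult_pos_pos zero_le_mult_iff)
  then show ?thesis unfolding s_def r_def by (simp add: mult.commute)
qed

end


lemma apow_Suc: "n \<ge> 1 \<Longrightarrow> apow (a::'a::real_normed_algebra) (Suc n) = a * apow a n"
  by (cases n) auto

lemma apow_add: "n \<ge> 1 \<Longrightarrow> m \<ge> 1 \<Longrightarrow> apow (a::'a::real_normed_algebra) (n + m) = apow a n * apow a m"
proof (induction n rule: dec_induct[of 1])
  case base
  then show ?case using apow_Suc[of m a] by simp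
next
  case (step n)
  then show ?case using apow_Suc[of "n+m" a] apow_Suc[of n a] by (simp add: mult.assoc)
qed

lemma apow_comm: "apow (a::'a::real_normed_algebra) (Suc n) * a = a * apow a (Suc n)"
proof (induction n)
  case 0 then show ?case by simp
next
  case (Suc n) then show ?case by (simp add: mult.assoc)
qed

lemma apow_norm_mult: assumes "m \<ge> 1" "j \<ge> 1" shows "norm (apow (a::'a::real_normed_algebra) (m * j)) \<le> norm (apow a m) ^ j"
  using assms(2)
proof (induction j rule: dec_induct[of 1])
  case base then show ?case by simp
next
  case (step j)
  have "apow a (m * Suc j) = apow a (m*j) * apow a m"
    using apow_add[of "m*j" m a] step assms(1) by (simp add: add.commute)
  then have "norm (apow a (m * Suc j)) \<le> norm (apow a (m*j)) * norm (apow a m)"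
    by (simp add: norm_mult_ineq)
  also have "\<dots> \<le> norm (apow a m) ^ j * norm (apow a m)"
    using step by (simp add: mult_right_mono)
  finally show ?case by (simp add: mult.commute)
qed

lemma powr_pow_inv: "(y::real) \<ge> 0 \<Longrightarrow> m \<ge> 1 \<Longrightarrow> (y powr (1 / real m)) ^ m = y"
proof (cases "y = 0")
  case False
  assume "y \<ge> 0" "m \<ge> 1"
  then have "y > 0" using False by simp
  then show ?thesis using \<open>m \<ge> 1\<close> by (simp add: powr_realpow[symmetric] powr_powr)
qed simp

lemma r_lambda_nonneg: "r_lambda a \<ge> 0"
  unfolding r_lambda_def by (rule cINF_greatest) auto

lemma r_lambda_le: "m \<ge> 1 \<Longrightarrow> r_lambda a \<le> norm (apow a m) powr (1 / real m)"
  unfolding r_lambda_def by (rule cINF_lower) (auto intro!: bdd_belowI[of _ 0])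

lemma growth: fixes \<rho> \<mu> K :: real
  assumes "\<rho> \<ge> 0" "\<mu> \<ge> 0" "m \<ge> 1" "\<And>j. j \<ge> 1 \<Longrightarrow> \<rho> ^ (2*m*j) \<le> K * \<mu> ^ (2*m*j)"
  shows "\<rho> \<le> \<mu>"
proof (rule ccontr)
  assume "\<not> \<rho> \<le> \<mu>"
  then have lt: "\<mu> < \<rho>" by simp
  show False
  proof (cases "\<mu> = 0")
    case True
    have "\<rho> ^ (2*m) \<le> 0" using assms(4)[of 1] True assms(3) by (simp add: power_0_left)
    moreover have "\<rho> ^ (2*m) > 0" using lt True by simp
    ultimately show False by simp
  next
    case False
    then have mp: "\<mu> > 0" using assms(2) by simp
    have "\<rho>/\<mu> > 1" using lt mp by simp
    then obtain n where n: "max K 1 < (\<rho>/\<mu>)^n" using real_arch_pow by blast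
    define j where "j = Suc n"
    have "1 * j \<le> (2*m) * j" using assms(3) by (intro mult_le_mono1) simp
    then have "n \<le> 2*m*j" unfolding j_def by simp
    then have "(\<rho>/\<mu>)^n \<le> (\<rho>/\<mu>)^(2*m*j)" using \<open>\<rho>/\<mu> > 1\<close> by (simp add: power_increasing)
    also have "\<dots> = \<rho>^(2*m*j) / \<mu>^(2*m*j)" by (simp add: power_divide)
    also have "\<dots> \<le> K" using assms(4)[of j] mp unfolding j_def by (simp add: divide_le_eq)
    finally show False using n by simp
  qed
qed



locale mainloc = ph hsmul ip
  for hsmul :: "complex \<Rightarrow> 'h::ab_group_add \<Rightarrow> 'h" and ip :: "'h \<Rightarrow> 'h \<Rightarrow> complex" +
  fixes smul :: "complex \<Rightarrow> 'a::real_normed_algebra \<Rightarrow> 'a" and star :: "'a \<Rightarrow> 'a"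
    and \<pi> :: "'a \<Rightarrow> 'h \<Rightarrow> 'h"
  assumes NSA: "normed_star_algebra smul star"
    and REP: "star_representation smul star hsmul ip \<pi>"
    and WC: "weakly_continuous_sa star ip \<pi>"
begin

lemma smul_real: "smul (complex_of_real r) a = r *\<^sub>R a"
  by (rule NSA[unfolded normed_star_algebra_def complex_normed_algebra_def, THEN conjunct1, THEN conjunct1, rule_format])
lemma star_add: "star (a + b) = star a + star b"
  by (rule NSA[unfolded normed_star_algebra_def, THEN conjunct2, THEN conjunct1, rule_format])
lemma star_smul: "star (smul c a) = smul (cnj c) (star a)"
  by (rule NSA[unfolded normed_star_algebra_def, THEN conjunct2, THEN conjunct2, THEN conjunct1, rule_format])
lemma star_mult: "star (a * b) = star b * star a"
  by (rule NSA[unfolded normed_star_algebra_def, THEN conjunct2, THEN conjunct2, THEN conjunct2, THEN conjunct1, rule_format])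
lemma star_star: "star (star a) = a"
  by (rule NSA[unfolded normed_star_algebra_def, THEN conjunct2, THEN conjunct2, THEN conjunct2, THEN conjunct2, rule_format])

lemma pi_addx: "\<pi> a (x + y) = \<pi> a x + \<pi> a y" by (rule REP[unfolded star_representation_def, THEN conjunct1, rule_format])
lemma pi_add: "\<pi> (a + b) x = \<pi> a x + \<pi> b x" by (rule REP[unfolded star_representation_def, THEN conjunct2, THEN conjunct2, THEN conjunct1, rule_format])
lemma pi_smul: "\<pi> (smul c a) x = hsmul c (\<pi> a x)" by (rule REP[unfolded star_representation_def, THEN conjunct2, THEN conjunct2, THEN conjunct2, THEN conjunct1, rule_format])
lemma pi_mult: "\<pi> (a * b) x = \<pi> a (\<pi> b x)" by (rule REP[unfolded star_representation_def, THEN conjunct2, THEN conjunct2, THEN conjunct2, THEN conjunct2, THEN conjunct1, rule_format])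
lemma pi_adj: "ip (\<pi> a x) y = ip x (\<pi> (star a) y)" by (rule REP[unfolded star_representation_def, THEN conjunct2, THEN conjunct2, THEN conjunct2, THEN conjunct2, THEN conjunct2, rule_format])
lemma weak: "continuous_on (self_adjoint_part star) (\<lambda>a. ip (\<pi> a x) x)"
  using WC unfolding weakly_continuous_sa_def by (rule spec)

lemma star_zero: "star 0 = 0" using star_add[of 0 0] by simp
lemma star_scaleR: "star (r *\<^sub>R a) = r *\<^sub>R star a"
  using star_smul[of "complex_of_real r" a] smul_real by simp
lemma pi_zero: "\<pi> 0 x = 0" using pi_add[of 0 0 x] by simp
lemma pi_zerox: "\<pi> a 0 = 0" using pi_addx[of a 0 0] by simp
lemma pi_scaleR: "\<pi> (r *\<^sub>R b) x = hsmul (complex_of_real r) (\<pi> b x)"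
  using pi_smul[of "complex_of_real r" b x] smul_real by simp

lemma sa_apow_Suc: assumes "star h = h" shows "star (apow h (Suc k)) = apow h (Suc k)"
proof (induction k)
  case 0 show ?case using assms by (simp only: apow.simps)
next
  case (Suc k)
  have "star (apow h (Suc (Suc k))) = star (h * apow h (Suc k))" by (simp only: apow.simps)
  also have "\<dots> = star (apow h (Suc k)) * star h" by (rule star_mult)
  also have "\<dots> = apow h (Suc k) * h" by (simp only: Suc assms)
  also have "\<dots> = h * apow h (Suc k)" by (rule apow_comm)
  also have "\<dots> = apow h (Suc (Suc k))" by (simp only: apow.simps)
  finally show ?case .
qed

lemma sa_apow: assumes "star h = h" shows "star (apow h n) = apow h n"
proof (cases n)
  case 0 then show ?thesis using assms by (simp only: apow.simps)
next
  case (Suc k) then show ?thesis using sa_apow_Suc[OF assms] by simp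
qed

lemma bound: "\<exists>C>0. \<forall>b\<in>self_adjoint_part star. cmod (ip (\<pi> b x) x) \<le> C * norm b"
proof -
  let ?S = "self_adjoint_part star"
  let ?f = "\<lambda>a. ip (\<pi> a x) x"
  have z: "0 \<in> ?S" by (simp add: self_adjoint_part_def star_zero)
  have "\<forall>e>0. \<exists>d>0. \<forall>b\<in>?S. dist b 0 < d \<longrightarrow> dist (?f b) (?f 0) < e"
    using weak[of x] z unfolding continuous_on_iff by blast
  then obtain d where d: "d > 0" "\<And>b. b \<in> ?S \<Longrightarrow> dist b 0 < d \<Longrightarrow> dist (?f b) (?f 0) < 1"
    using zero_less_one by blast
  have "cmod (?f b) \<le> (2/d) * norm b" if b: "b \<in> ?S" for b
  proof (cases "b = 0")
    case True then show ?thesis by (simp add: pi_zero)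
  next
    case False
    define t where "t = d / (2 * norm b)"
    have tp: "t > 0" using d False unfolding t_def by simp
    have "(t *\<^sub>R b) \<in> ?S" using b by (simp add: self_adjoint_part_def star_scaleR)
    moreover have "dist (t *\<^sub>R b) 0 < d" using tp d False unfolding t_def by simp
    ultimately have "dist (?f (t *\<^sub>R b)) (?f 0) < 1" by (rule d(2))
    then have "cmod (complex_of_real t * ?f b) < 1"
      by (simp add: pi_zero pi_scaleR ip_smulL dist_norm)
    then have "t * cmod (?f b) < 1" using tp by (simp add: norm_mult)
    then have "cmod (?f b) < 1 / t" using tp by (simp add: field_simps)
    then show ?thesis unfolding t_def using d by (simp add: field_simps)
  qed
  then show ?thesis using d by (intro exI[of _ "2/d"]) auto
qed

definition G :: "'a \<Rightarrow> 'h \<Rightarrow> nat \<Rightarrow> 'h" where "G h x k = (\<pi> h ^^ k) x"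

lemma G_Suc: "G h x (Suc k) = \<pi> h (G h x k)" unfolding G_def by simp
lemma G_0: "G h x 0 = x" unfolding G_def by simp

lemma G_apow: "k \<ge> 1 \<Longrightarrow> G h x k = \<pi> (apow h k) x"
proof (induction k rule: dec_induct[of 1])
  case base then show ?case by (simp add: G_Suc G_0)
next
  case (step k) then show ?case using apow_Suc[of k h] by (simp add: G_Suc pi_mult)
qed

lemma G_shift: assumes "star h = h" shows "ip (G h x a) (G h x b) = ip x (G h x (a + b))"
proof (induction a arbitrary: b)
  case 0 then show ?case by (simp add: G_0)
next
  case (Suc a)
  have "ip (G h x (Suc a)) (G h x b) = ip (G h x a) (G h x (Suc b))"
    by (simp add: G_Suc pi_adj assms)
  also have "\<dots> = ip x (G h x (Suc a + b))" using Suc by simp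
  finally show ?case .
qed


lemma logconv: assumes "star h = h"
  shows "(hnorm ip (G h x (Suc k)))^2 \<le> hnorm ip (G h x k) * hnorm ip (G h x (Suc (Suc k)))"
proof -
  have E1: "(hnorm ip (G h x (Suc k)))^2 = Re (ip (G h x (Suc k)) (G h x (Suc k)))" by (rule hnorm_sq)
  have E2: "ip (G h x (Suc k)) (G h x (Suc k)) = ip (G h x k) (G h x (Suc (Suc k)))"
    unfolding G_Suc pi_adj assms ..
  have E3: "Re (ip (G h x k) (G h x (Suc (Suc k)))) \<le> hnorm ip (G h x k) * hnorm ip (G h x (Suc (Suc k)))"
    by (rule CS)
  show ?thesis using E1 E2 E3 by simp
qed

lemma Sstep: assumes "star h = h"
  shows "hnorm ip (G h x n) * hnorm ip (G h x 1) \<le> hnorm ip (G h x (Suc n)) * hnorm ip (G h x 0)"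
proof (induction n)
  case 0 show ?case by (simp only: One_nat_def mult.commute order_refl)
next
  case (Suc n)
  define a where "a = hnorm ip (G h x n)"
  define b where "b = hnorm ip (G h x (Suc n))"
  define c where "c = hnorm ip (G h x (Suc (Suc n)))"
  define u where "u = hnorm ip (G h x 1)"
  define z where "z = hnorm ip (G h x 0)"
  have nn: "a \<ge> 0" "b \<ge> 0" "c \<ge> 0" "u \<ge> 0" "z \<ge> 0"
    unfolding a_def b_def c_def u_def z_def by (simp_all only: hnorm_nonneg)
  have lc: "b^2 \<le> a * c" unfolding a_def b_def c_def by (rule logconv[OF assms])
  have IH: "a * u \<le> b * z" using Suc unfolding a_def b_def u_def z_def .
  have "b * (b * u) = b^2 * u" by (simp add: power2_eq_square)
  also have "\<dots> \<le> (a * c) * u" using lc nn by (intro mult_right_mono) auto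
  also have "\<dots> = c * (a * u)" by (simp only: mult_ac)
  also have "\<dots> \<le> c * (b * z)" using IH nn by (intro mult_left_mono) auto
  also have "\<dots> = b * (c * z)" by (simp only: mult_ac)
  finally have *: "b * (b * u) \<le> b * (c * z)" .
  have "b * u \<le> c * z"
  proof (cases "b = 0")
    case True then show ?thesis using nn by simp
  next
    case False
    then have bp: "b > 0" using nn by simp
    show ?thesis using * bp by (rule mult_left_le_imp_le)
  qed
  then show ?case unfolding b_def u_def c_def z_def .
qed

lemma Pbound: assumes "star h = h"
  shows "hnorm ip (G h x 1) ^ Suc n \<le> hnorm ip (G h x (Suc n)) * hnorm ip x ^ n"
proof (induction n)
  case 0 then show ?case by simp
next
  case (Suc n)
  define u where "u = hnorm ip (G h x 1)"
  define b where "b = hnorm ip (G h x (Suc n))"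
  define c where "c = hnorm ip (G h x (Suc (Suc n)))"
  define z where "z = hnorm ip x"
  have nn: "b \<ge> 0" "c \<ge> 0" "u \<ge> 0" "z \<ge> 0"
    unfolding b_def c_def u_def z_def by (simp_all only: hnorm_nonneg)
  have IH: "u ^ Suc n \<le> b * z ^ n" using Suc unfolding u_def b_def z_def .
  have S: "b * u \<le> c * z" using Sstep[OF assms, of x "Suc n"] unfolding b_def u_def c_def z_def G_0 .
  have "u ^ Suc (Suc n) = u ^ Suc n * u" by (simp only: power_Suc2)
  also have "\<dots> \<le> (b * z ^ n) * u" using IH nn by (intro mult_right_mono) auto
  also have "\<dots> = (b * u) * z ^ n" by (simp only: mult_ac)
  also have "\<dots> \<le> (c * z) * z ^ n" using S nn by (intro mult_right_mono) auto
  also have "\<dots> = c * z ^ Suc n" by (simp only: power_Suc mult_ac)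
  finally show ?case unfolding u_def c_def z_def .
qed

lemma herm_bound_m: assumes h: "star h = h" and m: "m \<ge> 1"
  shows "hnorm ip (\<pi> h x) \<le> norm (apow h m) powr (1 / real m) * hnorm ip x"
proof (cases "x = 0")
  case True then show ?thesis by (simp add: pi_zerox hnorm_def)
next
  case False
  let ?g = "\<lambda>k. hnorm ip (G h x k)"
  define g0 where "g0 = hnorm ip x"
  have g0p: "g0 > 0" using False hnorm_nonneg hnorm_zero_iff unfolding g0_def by (simp add: less_le)
  define \<mu> where "\<mu> = norm (apow h m) powr (1 / real m)"
  have \<mu>0: "\<mu> \<ge> 0" unfolding \<mu>_def by simp
  have hS: "h \<in> self_adjoint_part star" using h by (simp add: self_adjoint_part_def)
  obtain C where C: "C > 0" "\<And>b. b\<in>self_adjoint_part star \<Longrightarrow> cmod (ip (\<pi> b x) x) \<le> C * norm b"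
    using bound[of x] by blast
  have g1: "?g 1 = hnorm ip (\<pi> h x)" by (simp add: G_Suc G_0)
  have key: "(?g 1 / g0) ^ (2*m*j) \<le> (C / g0^2) * \<mu> ^ (2*m*j)" if j: "j \<ge> 1" for j
  proof -
    define M where "M = m * j"
    have M1: "M \<ge> 1" using m j unfolding M_def by simp
    then obtain n where n: "M = Suc n" by (cases M) auto
    have "?g 1 ^ M \<le> ?g M * g0 ^ n" using Pbound[OF h, of x n] n g0_def by simp
    then have "(?g 1 ^ M)^2 \<le> (?g M * g0 ^ n)^2"
      by (intro power_mono) (simp_all add: hnorm_nonneg)
    then have A: "?g 1 ^ (2*M) \<le> (?g M)^2 * g0 ^ (2*n)"
      by (simp add: power_mult_distrib power_mult[symmetric] mult.commute)
    have MM: "M + M = m * (2*j)" unfolding M_def by simp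
    have "(?g M)^2 = Re (ip x (G h x (M + M)))" using hnorm_sq G_shift[OF h, of x M M] by simp
    also have "\<dots> = Re (ip (G h x (M + M)) x)" using ip_Re_sym by simp
    also have "\<dots> \<le> cmod (ip (G h x (M + M)) x)" by (rule complex_Re_le_cmod)
    also have "\<dots> = cmod (ip (\<pi> (apow h (m * (2*j))) x) x)"
      using G_apow[of "M+M" h x] M1 MM m j by simp
    also have "\<dots> \<le> C * norm (apow h (m * (2*j)))"
      using C(2) sa_apow[OF h] by (simp add: self_adjoint_part_def)
    also have "\<dots> \<le> C * norm (apow h m) ^ (2*j)"
      using apow_norm_mult[of m "2*j" h] m j C(1) by (simp add: mult_left_mono)
    also have "norm (apow h m) = \<mu> ^ m" unfolding \<mu>_def using powr_pow_inv[of "norm (apow h m)" m] m by simp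
    finally have B: "(?g M)^2 \<le> C * \<mu> ^ (2*m*j)" by (simp add: power_mult[symmetric] mult_ac)
    have "?g 1 ^ (2*M) \<le> C * \<mu> ^ (2*m*j) * g0 ^ (2*n)"
      using A B by (meson order_trans mult_right_mono zero_le_power g0p less_imp_le)
    moreover have "g0 ^ (2*M) = g0 ^ (2*n) * g0^2" using n by (simp add: power_add[symmetric])
    ultimately have "?g 1 ^ (2*M) / g0 ^ (2*M) \<le> C * \<mu> ^ (2*m*j) / g0^2"
      using g0p by (simp add: divide_simps mult_ac)
    then show ?thesis unfolding M_def by (simp add: power_divide mult_ac)
  qed
  have "?g 1 / g0 \<le> \<mu>"
    by (rule growth[OF _ \<mu>0 m key]) (simp_all add: hnorm_nonneg g0p less_imp_le)
  then show ?thesis using g0p g1 unfolding \<mu>_def g0_def by (simp add: divide_le_eq)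
qed

lemma herm_bound: assumes h: "star h = h"
  shows "hnorm ip (\<pi> h x) \<le> r_lambda h * hnorm ip x"
proof (cases "x = 0")
  case True then show ?thesis by (simp add: pi_zerox hnorm_def)
next
  case False
  then have p: "hnorm ip x > 0" using hnorm_nonneg hnorm_zero_iff by (simp add: less_le)
  have "hnorm ip (\<pi> h x) / hnorm ip x \<le> r_lambda h"
    unfolding r_lambda_def
  proof (rule cINF_greatest)
    fix m :: nat assume "m \<in> {1..}"
    then show "hnorm ip (\<pi> h x) / hnorm ip x \<le> norm (apow h m) powr (1 / real m)"
      using herm_bound_m[OF h, of m x] p by (simp add: divide_le_eq)
  qed simp
  then show ?thesis using p by (simp add: divide_le_eq)
qed

lemma final_bound: "hnorm ip (\<pi> a x) \<le> r_sigma star a * hnorm ip x"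
proof -
  define k where "k = star a * a"
  have hk: "star k = k" unfolding k_def by (simp add: star_mult star_star)
  have "(hnorm ip (\<pi> a x))^2 = Re (ip (\<pi> a x) (\<pi> a x))" by (rule hnorm_sq)
  also have "ip (\<pi> a x) (\<pi> a x) = ip x (\<pi> k x)" unfolding k_def by (simp add: pi_adj pi_mult)
  also have "Re (ip x (\<pi> k x)) \<le> hnorm ip x * hnorm ip (\<pi> k x)" by (rule CS)
  also have "\<dots> \<le> hnorm ip x * (r_lambda k * hnorm ip x)"
    using herm_bound[OF hk, of x] by (simp add: mult_left_mono hnorm_nonneg)
  finally have "(hnorm ip (\<pi> a x))^2 \<le> r_lambda k * (hnorm ip x)^2" by (simp add: power2_eq_square mult_ac)
  then have "hnorm ip (\<pi> a x) \<le> sqrt (r_lambda k * (hnorm ip x)^2)" by (rule real_le_rsqrt)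
  then show ?thesis unfolding r_sigma_def k_def[symmetric]
    by (simp add: real_sqrt_mult hnorm_nonneg)
qed

end

theorem theorem22p5:
  fixes smul :: "complex \<Rightarrow> 'a::real_normed_algebra \<Rightarrow> 'a"
    and star :: "'a \<Rightarrow> 'a"
    and hsmul :: "complex \<Rightarrow> 'h::ab_group_add \<Rightarrow> 'h"
    and ip :: "'h \<Rightarrow> 'h \<Rightarrow> complex"
    and \<pi> :: "'a \<Rightarrow> 'h \<Rightarrow> 'h"
  assumes "normed_star_algebra smul star"
    and "pre_hilbert hsmul ip"
    and "star_representation smul star hsmul ip \<pi>"
    and "weakly_continuous_sa star ip \<pi>"
  shows "\<forall>a. bounded_op ip (\<pi> a) \<and> op_norm ip (\<pi> a) \<le> r_sigma star a"
proof -
  interpret M: mainloc hsmul ip smul star \<pi>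
    using assms by (simp add: mainloc_def ph_def mainloc_axioms_def)
  show ?thesis
  proof
    fix a
    have B: "\<And>x. hnorm ip (\<pi> a x) \<le> r_sigma star a * hnorm ip x" by (rule M.final_bound)
    have nn: "r_sigma star a \<ge> 0" unfolding r_sigma_def using r_lambda_nonneg by simp
    have "bounded_op ip (\<pi> a)" unfolding bounded_op_def using B by blast
    moreover have "op_norm ip (\<pi> a) \<le> r_sigma star a"
      unfolding op_norm_def
    proof (rule cSUP_least)
      show "{x. hnorm ip x \<le> 1} \<noteq> {}"
        using M.hnorm_zero_iff[of 0] by (intro ex_in_conv[THEN iffD1] exI[of _ 0]) simp
    next
      fix x assume "x \<in> {x. hnorm ip x \<le> 1}"
      then have "hnorm ip x \<le> 1" by simp
      then have "r_sigma star a * hnorm ip x \<le> r_sigma star a * 1" using nn by (rule mult_left_mono)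
      then show "hnorm ip (\<pi> a x) \<le> r_sigma star a" using B[of x] by simp
    qed
    ultimately show "bounded_op ip (\<pi> a) \<and> op_norm ip (\<pi> a) \<le> r_sigma star a" by blast
  qed
qed

end
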